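(* Let $m\geq 1$, let $\Gamma=C_{4m}=\langle\gamma\rangle$ be the cyclic group of order $4m$, and let $\sigma=\gamma^{2m}$. Then there is no centrally symmetric convex $3$-polytope $P$ in $\mathbb{E}^3$ such that $\Gamma(P)=\Gamma$ and $\sigma$ is realized as the central symmetry of $P$ (i.e., there is no isomorphism $\Gamma\to\Gamma(P)$ sending $\sigma$ to the automorphism induced by $x\mapsto -x$).
   Context: For a convex polytope $P$, $\Gamma(P)$ is the group of combinatorial automorphisms of its face lattice. $P$ is centrally symmetric if $-P=P$ (with respect to the origin), so $x\mapsto -x$ induces an automorphism of $P$. *)

theory Defs
  imports "HOL-Analysis.Analysis" "HOL-Algebra.Elementary_Groups" "HOL-Algebra.Bij"
begin

definition faces :: "'a::real_normed_vector set \<Rightarrow> 'a set set" where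
  "faces P = {F. F face_of P}"

text \<open>Combinatorial automorphisms: bijections of the face set preserving and reflecting inclusion
(i.e. lattice automorphisms), taken extensional on the face set.\<close>
definition comb_auts :: "'a::real_normed_vector set \<Rightarrow> ('a set \<Rightarrow> 'a set) set" where
  "comb_auts P = {f \<in> Bij (faces P).
      \<forall>F\<in>faces P. \<forall>G\<in>faces P. (F \<subseteq> G \<longleftrightarrow> f F \<subseteq> f G)}"

definition comb_aut_group :: "'a::real_normed_vector set \<Rightarrow> ('a set \<Rightarrow> 'a set) monoid" where
  "comb_aut_group P = (BijGroup (faces P)) \<lparr>carrier := comb_auts P\<rparr>"

definition antipodal_aut :: "'a::real_normed_vector set \<Rightarrow> ('a set \<Rightarrow> 'a set)" where
  "antipodal_aut P = (\<lambda>F\<in>faces P. uminus ` F)"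

end

theory Submission
  imports Defs "HOL-Homology.Homology" "HOL-Combinatorics.Permutations"
begin


lemma cm_swap:
  assumes "k \<le> n"
  shows "continuous_map (nsphere n) (nsphere n) (\<lambda>x. x \<circ> Transposition.transpose 0 k)"
proof -
  have perm: "Transposition.transpose 0 k permutes {..n}"
    using assms by (intro permutes_swap_id) auto
  have sq: "(\<Sum>i\<le>n. (x (Transposition.transpose 0 k i))^2) = (\<Sum>i\<le>n. (x i)^2)" for x :: "nat \<Rightarrow> real"
    using sum.permute[OF perm, of "\<lambda>i. (x i)^2"] by (simp add: o_def)
  have hi: "i > n \<Longrightarrow> Transposition.transpose 0 k i = i" for i
    using assms by (auto simp: Transposition.transpose_def)
  have c: "continuous_map (subtopology (powertop_real UNIV) {x. (\<Sum>i\<le>n. (x i)\<^sup>2) = 1 \<and> (\<forall>i>n. x i = 0)})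
        (powertop_real UNIV) (\<lambda>x. x \<circ> Transposition.transpose 0 k)"
      unfolding continuous_map_componentwise_UNIV o_def
      by (auto intro: continuous_map_from_subtopology continuous_map_product_projection)
  show ?thesis
    unfolding nsphere continuous_map_in_subtopology
    using c sq hi by auto
qed

lemma deg_reflect:
  assumes "k \<le> n"
  shows "Brouwer_degree2 n (\<lambda>x i. if i = k then -x i else x i) = -1"
proof -
  define s where "s = (\<lambda>x::nat\<Rightarrow>real. x \<circ> Transposition.transpose 0 k)"
  define r where "r = (\<lambda>(x::nat\<Rightarrow>real) i. if i = 0 then -x i else x i)"
  have cs: "continuous_map (nsphere n) (nsphere n) s"
    unfolding s_def using cm_swap[OF assms] .
  have cr: "continuous_map (nsphere n) (nsphere n) r"
    unfolding r_def by (rule continuous_map_nsphere_reflection)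
  have crs: "continuous_map (nsphere n) (nsphere n) (r \<circ> s)"
    using cs cr by (rule continuous_map_compose)
  have ss: "s \<circ> s = id"
    by (auto simp: s_def fun_eq_iff Transposition.transpose_def)
  have "Brouwer_degree2 n s * Brouwer_degree2 n s = 1"
    using Brouwer_degree2_compose[OF cs cs] ss by simp
  moreover have "(\<lambda>x i. if i = k then -x i else x i) = s \<circ> (r \<circ> s)"
    by (auto simp: s_def r_def fun_eq_iff Transposition.transpose_def)
  moreover have "Brouwer_degree2 n (s \<circ> (r \<circ> s)) = Brouwer_degree2 n s * (Brouwer_degree2 n r * Brouwer_degree2 n s)"
    using Brouwer_degree2_compose[OF crs cs] Brouwer_degree2_compose[OF cs cr] by simp
  moreover have "Brouwer_degree2 n r = -1"
    unfolding r_def by (rule Brouwer_degree2_reflection)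
  ultimately show ?thesis by (simp add: algebra_simps)
qed

lemma deg_neg2: "Brouwer_degree2 2 (\<lambda>x i. - x i) = -1"
proof -
  define r where "r = (\<lambda>k (x::nat\<Rightarrow>real) i. if i = k then -x i else x i)"
  have c: "continuous_map (nsphere 2) (nsphere 2) (r k)" for k
    unfolding r_def by (rule continuous_map_nsphere_reflection)
  have d: "k \<le> 2 \<Longrightarrow> Brouwer_degree2 2 (r k) = -1" for k
    unfolding r_def by (rule deg_reflect)
  have "Brouwer_degree2 2 (\<lambda>x i. - x i) = Brouwer_degree2 2 (r 0 \<circ> (r 1 \<circ> r 2))"
  proof (rule Brouwer_degree2_eq)
    fix x assume "x \<in> topspace (nsphere 2)"
    then have "\<forall>i>2. x i = 0" by (simp add: nsphere)
    then show "(\<lambda>i. - x i) = (r 0 \<circ> (r 1 \<circ> r 2)) x"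
      by (auto simp: r_def fun_eq_iff)
  qed
  also have "\<dots> = Brouwer_degree2 2 (r 0) * (Brouwer_degree2 2 (r 1) * Brouwer_degree2 2 (r 2))"
    using Brouwer_degree2_compose[OF continuous_map_compose[OF c[of 2] c[of 1]] c[of 0]]
      Brouwer_degree2_compose[OF c[of 2] c[of 1]] by simp
  also have "\<dots> = -1" using d[of 0] d[of 1] d[of 2] by simp
  finally show ?thesis .
qed



lemma fpf_homotopic_neg:
  assumes k: "continuous_map (nsphere n) (nsphere n) k"
    and nf: "\<And>x. x \<in> topspace (nsphere n) \<Longrightarrow> k x \<noteq> x"
  shows "homotopic_with (\<lambda>x. True) (nsphere n) (nsphere n) k (\<lambda>x i. - x i)"
proof -
  define a where "a = (\<lambda>(t::real) x (j::nat). (1-t) * k x j - t * x j)"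
  define D where "D = (\<lambda>t x. \<Sum>j\<le>n. (a t x j)^2)"
  define H where "H = (\<lambda>p i. a (fst p) (snd p) i / sqrt (D (fst p) (snd p)))"
  let ?X = "prod_topology (top_of_set {0..1::real}) (nsphere n)"
  have tsp: "x \<in> topspace (nsphere n) \<longleftrightarrow> (\<Sum>i\<le>n. (x i)^2) = 1 \<and> (\<forall>i>n. x i = 0)" for x
    by (simp add: nsphere)
  have kin: "k x \<in> topspace (nsphere n)" if "x \<in> topspace (nsphere n)" for x
    using k that by (auto simp: continuous_map_def)
  have Dnz: "D t x \<noteq> 0" if x: "x \<in> topspace (nsphere n)" and t: "t \<in> {0..1}" for t x
  proof
    assume D0: "D t x = 0"
    have "\<forall>j\<in>{..n}. (a t x j)^2 = 0"
      using D0 unfolding D_def by (subst (asm) sum_nonneg_eq_0_iff) auto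
    then have eq: "(1-t) * k x j = t * x j" if "j \<le> n" for j
      using that by (auto simp: a_def)
    have kx: "(\<Sum>i\<le>n. (k x i)^2) = 1" "\<forall>i>n. k x i = 0"
      using kin[OF x] tsp by auto
    have xx: "(\<Sum>i\<le>n. (x i)^2) = 1" "\<forall>i>n. x i = 0"
      using x tsp by auto
    have "(1-t)^2 = (\<Sum>i\<le>n. ((1-t) * k x i)^2)"
      using kx by (simp add: power_mult_distrib flip: sum_distrib_left)
    also have "\<dots> = (\<Sum>i\<le>n. (t * x i)^2)"
      using eq by (intro sum.cong) auto
    also have "\<dots> = t^2"
      using xx by (simp add: power_mult_distrib flip: sum_distrib_left)
    finally have "(1-t)^2 = t^2" .
    then have "t = 1/2" by (simp add: power2_eq_square algebra_simps)
    then have "k x j = x j" if "j \<le> n" for j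
      using eq[OF that] \<open>t = 1/2\<close> by simp
    then have "k x = x"
      using kx xx by (metis ext not_le)
    then show False using nf x by blast
  qed
  have Dnn: "D t x \<ge> 0" for t x unfolding D_def by (simp add: sum_nonneg)
  have cfst: "continuous_map ?X euclideanreal fst"
    by (metis continuous_map_fst continuous_map_into_fulltopology)
  have cproj: "continuous_map ?X euclideanreal (\<lambda>p. snd p j)" for j
    using continuous_map_compose[OF continuous_map_snd continuous_map_nsphere_projection] by (simp add: o_def)
  have ck: "continuous_map ?X euclideanreal (\<lambda>p. k (snd p) j)" for j
    using continuous_map_compose[OF continuous_map_compose[OF continuous_map_snd k] continuous_map_nsphere_projection]
    by (simp add: o_def)
  have ca: "continuous_map ?X euclideanreal (\<lambda>p. a (fst p) (snd p) j)" for j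
    unfolding a_def using cfst cproj ck by (intro continuous_intros) auto
  have cD: "continuous_map ?X euclideanreal (\<lambda>p. sqrt (D (fst p) (snd p)))"
    unfolding D_def
    by (intro continuous_map_sqrt continuous_map_sum continuous_intros ca) auto
  have sqnz: "sqrt (D (fst p) (snd p)) \<noteq> 0" if "p \<in> topspace ?X" for p
    using that Dnz by auto
  define S0 where "S0 = {x::nat\<Rightarrow>real. (\<Sum>i\<le>n. (x i)\<^sup>2) = 1 \<and> (\<forall>i>n. x i = 0)}"
  have eqn: "subtopology (powertop_real UNIV) S0 = nsphere n" by (simp add: nsphere S0_def)
  have "continuous_map ?X (subtopology (powertop_real UNIV) S0) H"
    unfolding continuous_map_in_subtopology S0_def
  proof (intro conjI)
    show "continuous_map ?X (powertop_real UNIV) H"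
      unfolding continuous_map_componentwise_UNIV H_def
      by (intro allI continuous_map_real_divide ca cD sqnz)
    show "H \<in> topspace ?X \<rightarrow> {x. (\<Sum>i\<le>n. (x i)\<^sup>2) = 1 \<and> (\<forall>i>n. x i = 0)}"
    proof
      fix p assume p: "p \<in> topspace ?X"
      then have x: "snd p \<in> topspace (nsphere n)" and t: "fst p \<in> {0..1}" by auto
      have "(\<Sum>i\<le>n. (H p i)^2) = (\<Sum>i\<le>n. (a (fst p) (snd p) i)^2) / D (fst p) (snd p)"
        unfolding H_def using Dnn by (simp add: power_divide sum_divide_distrib)
      also have "\<dots> = 1" using Dnz[OF x t] by (simp add: D_def)
      finally have 1: "(\<Sum>i\<le>n. (H p i)^2) = 1" .
      have "\<forall>i>n. H p i = 0"
        using kin[OF x] x by (simp add: H_def a_def tsp)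
      then show "H p \<in> {x. (\<Sum>i\<le>n. (x i)\<^sup>2) = 1 \<and> (\<forall>i>n. x i = 0)}" using 1 by simp
    qed
  qed
  then have cH: "continuous_map ?X (nsphere n) H" unfolding eqn .
  have "homotopic_with (\<lambda>x. True) (nsphere n) (nsphere n) (\<lambda>x. H (0, x)) (\<lambda>x. H (1, x))"
    unfolding homotopic_with_def using cH by blast
  then show ?thesis
  proof (rule homotopic_with_eq)
    fix x assume x: "x \<in> topspace (nsphere n)"
    have "D 0 x = 1" using kin[OF x] by (simp add: D_def a_def tsp)
    then show "k x = H (0, x)" by (simp add: H_def a_def fun_eq_iff)
    have "D 1 x = 1" using x by (simp add: D_def a_def tsp)
    then show "(\<lambda>i. - x i) = H (1, x)" by (simp add: H_def a_def fun_eq_iff)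
  qed auto
qed

lemma nsphere2_square_fixpoint:
  assumes G: "continuous_map (nsphere 2) (nsphere 2) G"
  shows "\<exists>y\<in>topspace (nsphere 2). G (G y) = y"
proof (rule ccontr)
  assume "\<not> ?thesis"
  then have nf: "\<And>y. y \<in> topspace (nsphere 2) \<Longrightarrow> (G \<circ> G) y \<noteq> y" by auto
  have "homotopic_with (\<lambda>x. True) (nsphere 2) (nsphere 2) (G \<circ> G) (\<lambda>x i. - x i)"
    by (rule fpf_homotopic_neg[OF continuous_map_compose[OF G G] nf])
  then have "Brouwer_degree2 2 (G \<circ> G) = -1"
    using Brouwer_degree2_homotopic deg_neg2 by metis
  then have "Brouwer_degree2 2 G * Brouwer_degree2 2 G = -1"
    using Brouwer_degree2_compose[OF G G] by simp
  moreover have "Brouwer_degree2 2 G * Brouwer_degree2 2 G \<ge> 0" by simp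
  ultimately show False by simp
qed



lemma geo:
  fixes P :: "'a::euclidean_space set" and \<tau> :: "'a set \<Rightarrow> 'a set"
  assumes P: "polytope P" and P0: "0 \<in> rel_interior P" and Psym: "uminus ` P = P"
    and bij: "bij_betw \<tau> {F. F face_of P} {F. F face_of P}"
    and mono: "\<And>F G. F face_of P \<Longrightarrow> G face_of P \<Longrightarrow> F \<subseteq> G \<longleftrightarrow> \<tau> F \<subseteq> \<tau> G"
    and sq: "\<And>F. F face_of P \<Longrightarrow> \<tau> (\<tau> F) = uminus ` F"
  shows "\<exists>g. continuous_on (rel_frontier P) g \<and> g ` rel_frontier P \<subseteq> rel_frontier P
             \<and> (\<forall>x\<in>rel_frontier P. g (g x) \<noteq> x)"
proof -
  have cvx: "convex P" using P by (simp add: polytope_imp_convex)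
  have tF: "F face_of P \<Longrightarrow> \<tau> F face_of P" for F
    using bij by (auto simp: bij_betw_def)
  have tsurj: "G face_of P \<Longrightarrow> \<exists>F. F face_of P \<and> \<tau> F = G" for G
  proof -
    assume "G face_of P"
    then have "G \<in> \<tau> ` {F. F face_of P}" using bij by (simp add: bij_betw_def)
    then show ?thesis by blast
  qed
  have tinj: "F face_of P \<Longrightarrow> G face_of P \<Longrightarrow> \<tau> F = \<tau> G \<Longrightarrow> F = G" for F G
    using bij by (auto simp: bij_betw_def inj_on_def)
  have e0: "{} face_of P" by simp
  have P_face: "P face_of P" using cvx by (simp add: face_of_refl)
  have te: "\<tau> {} = {}"
  proof -
    obtain F where F: "F face_of P" "\<tau> F = {}" using tsurj[OF e0] by blast
    then have "\<tau> {} \<subseteq> \<tau> F" using mono[OF e0 F(1)] by simp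
    then show ?thesis using F by simp
  qed
  have tP: "\<tau> P = P"
  proof -
    obtain F where F: "F face_of P" "\<tau> F = P" using tsurj[OF P_face] by blast
    then have "\<tau> F \<subseteq> \<tau> P" using mono[OF F(1) P_face] face_of_imp_subset by blast
    moreover have "\<tau> P \<subseteq> P" using tF[OF P_face] face_of_imp_subset by blast
    ultimately show ?thesis using F by simp
  qed
  have polyF: "F face_of P \<Longrightarrow> polytope F" for F
    using P face_of_polytope_polytope by blast
  have compF: "F face_of P \<Longrightarrow> compact F" for F
    using polyF polytope_imp_compact by blast
  have tvert: "\<exists>w. \<tau> {v} = {w}" if v: "{v} face_of P" for v
  proof -
    have ne: "\<tau> {v} \<noteq> {}"
      using tinj[OF v e0] te by auto
    have "compact (\<tau> {v})" "convex (\<tau> {v})"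
      using compF tF[OF v] face_of_imp_convex by blast+
    then obtain w where w: "w extreme_point_of (\<tau> {v})"
      using extreme_point_exists_convex ne by blast
    then have wf: "{w} face_of P"
      using face_of_trans tF[OF v] face_of_singleton by blast
    obtain G where G: "G face_of P" "\<tau> G = {w}" using tsurj[OF wf] by blast
    have "\<tau> G \<subseteq> \<tau> {v}" using G w by (simp add: extreme_point_of_def)
    then have "G \<subseteq> {v}" using mono[OF G(1) v] by simp
    moreover have "G \<noteq> {}" using G te by auto
    ultimately have "G = {v}" by auto
    then show ?thesis using G by auto
  qed
  define t where "t v = (SOME w. \<tau> {v} = {w})" for v
  have tv: "{v} face_of P \<Longrightarrow> \<tau> {v} = {t v}" for v
    unfolding t_def using tvert by (metis (mono_tags, lifting) someI_ex)
  define V where "V = {v. {v} face_of P}"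
  have finV: "finite V"
    unfolding V_def face_of_singleton
    using P finite_polyhedron_extreme_points polytope_imp_polyhedron by blast
  have finF: "finite {F. F face_of P}" using P finite_polytope_faces by blast
  define U where "U v = \<Union>{F. F face_of P \<and> v \<notin> F}" for v
  have clU: "closed (U v)" for v
    unfolding U_def using finF compF compact_imp_closed
    by (intro closed_Union) (auto intro: rev_finite_subset)
  have rfP: "rel_frontier P = \<Union>{F. F face_of P \<and> F \<noteq> P}"
    using P polytope_imp_polyhedron rel_frontier_of_polyhedron_alt by blast
  have rf_sub: "F face_of P \<Longrightarrow> F \<noteq> P \<Longrightarrow> F \<subseteq> rel_frontier P" for F
    by (rule face_of_subset_rel_frontier)
  have not0: "0 \<notin> rel_frontier P" using P0 by (simp add: rel_frontier_def)
  have negface: "F face_of P \<Longrightarrow> uminus ` F face_of P" for F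
    using face_of_linear_image[of uminus F P] Psym linear_uminus by (simp add: inj_on_def)
  have sym0: False if F: "F face_of P" "F \<noteq> P" and x: "x \<in> F" "-x \<in> F" for F x
  proof -
    have "(1/2) *\<^sub>R x + (1/2) *\<^sub>R (-x) \<in> F"
      using face_of_imp_convex[OF F(1)] x by (intro convexD) auto
    then have "0 \<in> F" by simp
    then show False using rf_sub[OF F] not0 by blast
  qed
  have pos: "\<exists>v\<in>V. infdist x (U v) > 0" if x: "x \<in> rel_frontier P" for x
  proof -
    define C where "C = \<Inter>{F. F face_of P \<and> x \<in> F}"
    have xP: "x \<in> P" using x polytope_imp_closed[OF P] by (auto simp: rel_frontier_def closure_closed)
    obtain F0 where F0: "F0 face_of P" "F0 \<noteq> P" "x \<in> F0" using x rfP by blast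
    have Cf: "C face_of P" unfolding C_def
      using xP P_face by (intro face_of_Inter) auto
    have xC: "x \<in> C" unfolding C_def by auto
    have CF0: "C \<subseteq> F0" unfolding C_def using F0 by auto
    have "compact C" "convex C" using compF[OF Cf] face_of_imp_convex[OF Cf] by auto
    then obtain v where v: "v extreme_point_of C" using extreme_point_exists_convex xC by blast
    then have vV: "{v} face_of P" using face_of_trans Cf face_of_singleton by blast
    have vC: "v \<in> C" using v extreme_point_of_def by blast
    have "v \<in> rel_frontier P" using vC CF0 rf_sub[OF F0(1,2)] by blast
    then have "v \<noteq> 0" using not0 by blast
    have nvf: "{-v} face_of P" using negface[OF vV] by simp
    have "-v \<noteq> v"
    proof
      assume "-v = v"
      then have "(-1::real) *\<^sub>R v = 1 *\<^sub>R v" by simp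
      then show False using \<open>v \<noteq> 0\<close> scaleR_cancel_right[of "-1" v 1] by simp
    qed
    then have "{-v} \<in> {F. F face_of P \<and> v \<notin> F}" using nvf by auto
    then have "-v \<in> U v" unfolding U_def by (rule UnionI) simp
    then have Une: "U v \<noteq> {}" by blast
    have "x \<notin> U v"
    proof
      assume "x \<in> U v"
      then obtain F where "F face_of P" "v \<notin> F" "x \<in> F" unfolding U_def by blast
      then have "C \<subseteq> F" unfolding C_def by (intro Inter_lower) simp
      then show False using vC \<open>v \<notin> F\<close> by blast
    qed
    then have "infdist x (U v) \<noteq> 0" using in_closed_iff_infdist_zero[OF clU Une] by blast
    then show ?thesis using vV infdist_nonneg[of x "U v"] unfolding V_def by force
  qed
  define S where "S x = (\<Sum>v\<in>V. infdist x (U v))" for x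
  have Spos: "S x > 0" if x: "x \<in> rel_frontier P" for x
  proof -
    obtain v where v: "v \<in> V" "infdist x (U v) > 0" using pos[OF x] by blast
    have "infdist x (U v) \<le> S x" unfolding S_def
      using finV v(1) by (intro member_le_sum) (auto simp: infdist_nonneg)
    then show ?thesis using v by simp
  qed
  define g where "g x = (\<Sum>v\<in>V. (infdist x (U v) / S x) *\<^sub>R t v)" for x
  have contg: "continuous_on (rel_frontier P) g"
    unfolding g_def S_def
    using Spos[unfolded S_def]
    by (intro continuous_intros continuous_on_infdist continuous_on_id) force
  have key: "g x \<in> \<tau> F" if x: "x \<in> rel_frontier P" and F: "F face_of P" "x \<in> F" for x F
  proof -
    define V' where "V' = {v\<in>V. infdist x (U v) \<noteq> 0}"
    have finV': "finite V'" using finV V'_def by simp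
    have inF: "t v \<in> \<tau> F" if "v \<in> V'" for v
    proof -
      have vV: "{v} face_of P" using that V'_def V_def by auto
      have "x \<notin> U v" using that infdist_zero unfolding V'_def by blast
      then have "v \<in> F" using F unfolding U_def by blast
      then have "\<tau> {v} \<subseteq> \<tau> F" using mono[OF vV F(1)] by simp
      then show ?thesis using tv[OF vV] by simp
    qed
    have gx: "g x = (\<Sum>v\<in>V'. (infdist x (U v) / S x) *\<^sub>R t v)"
      unfolding g_def V'_def using finV by (intro sum.mono_neutral_right) auto
    have "(\<Sum>v\<in>V'. infdist x (U v) / S x) = (\<Sum>v\<in>V. infdist x (U v) / S x)"
      unfolding V'_def using finV by (intro sum.mono_neutral_left) auto
    also have "\<dots> = 1" using Spos[OF x] by (simp add: S_def flip: sum_divide_distrib)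
    finally have s1: "(\<Sum>v\<in>V'. infdist x (U v) / S x) = 1" .
    show ?thesis unfolding gx
      using finV' face_of_imp_convex[OF tF[OF F(1)]] s1 Spos[OF x] inF
      by (intro convex_sum) (auto simp: infdist_nonneg)
  qed
  have gin: "g x \<in> rel_frontier P" if x: "x \<in> rel_frontier P" for x
  proof -
    obtain F where F: "F face_of P" "F \<noteq> P" "x \<in> F" using x rfP by blast
    have "\<tau> F \<noteq> P" using tinj[OF F(1) P_face] tP F(2) by auto
    then show ?thesis using key[OF x F(1,3)] rf_sub[OF tF[OF F(1)]] by blast
  qed
  have nfix: "g (g x) \<noteq> x" if x: "x \<in> rel_frontier P" for x
  proof
    assume eq: "g (g x) = x"
    obtain F where F: "F face_of P" "F \<noteq> P" "x \<in> F" using x rfP by blast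
    have "g (g x) \<in> \<tau> (\<tau> F)" using key[OF gin[OF x] tF[OF F(1)] key[OF x F(1,3)]] .
    then have "x \<in> uminus ` F" using eq sq[OF F(1)] by simp
    then have "-x \<in> F" by (metis add.inverse_inverse imageE)
    then show False using sym0[OF F(1,2) F(3)] by blast
  qed
  show ?thesis using contg gin nfix by blast
qed


theorem theorem5:
  fixes m :: nat
  assumes "m \<ge> 1"
  shows "\<not> (\<exists>(P :: (real^3) set) h.
            polytope P \<and> aff_dim P = 3 \<and> uminus ` P = P \<and>
            h \<in> iso (integer_mod_group (4 * m)) (comb_aut_group P) \<and>
            h (int (2 * m)) = antipodal_aut P)"
proof
  assume "\<exists>(P :: (real^3) set) h.
            polytope P \<and> aff_dim P = 3 \<and> uminus ` P = P \<and>
            h \<in> iso (integer_mod_group (4 * m)) (comb_aut_group P) \<and>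
            h (int (2 * m)) = antipodal_aut P"
  then obtain P :: "(real^3) set" and h where P: "polytope P" and dim: "aff_dim P = 3"
    and sym: "uminus ` P = P" and h: "h \<in> iso (integer_mod_group (4 * m)) (comb_aut_group P)"
    and h2: "h (int (2 * m)) = antipodal_aut P" by blast
  define \<tau> where "\<tau> = h (int m)"
  have mc: "int m \<in> carrier (integer_mod_group (4*m))"
    using assms by (simp add: carrier_integer_mod_group)
  have hom: "h \<in> hom (integer_mod_group (4*m)) (comb_aut_group P)"
    using h by (simp add: iso_def)
  have tc: "\<tau> \<in> comb_auts P"
    using hom mc unfolding \<tau>_def hom_def comb_aut_group_def by auto
  then have tB: "\<tau> \<in> Bij (faces P)" by (simp add: comb_auts_def)
  have mm: "int m \<otimes>\<^bsub>integer_mod_group (4*m)\<^esub> int m = int (2*m)"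
    using assms by simp
  have "h (int (2*m)) = \<tau> \<otimes>\<^bsub>comb_aut_group P\<^esub> \<tau>"
    using hom_mult[OF hom mc mc] mm unfolding \<tau>_def by metis
  also have "\<dots> = compose (faces P) \<tau> \<tau>"
    using tB by (simp add: comb_aut_group_def BijGroup_def)
  finally have hc: "compose (faces P) \<tau> \<tau> = antipodal_aut P" using h2 by simp
  have sq: "\<tau> (\<tau> F) = uminus ` F" if "F face_of P" for F
  proof -
    have "F \<in> faces P" using that by (simp add: faces_def)
    then show ?thesis using fun_cong[OF hc, of F] by (simp add: compose_def antipodal_aut_def)
  qed
  have bij: "bij_betw \<tau> {F. F face_of P} {F. F face_of P}"
    using tB by (simp add: Bij_def faces_def)
  have mono: "F \<subseteq> G \<longleftrightarrow> \<tau> F \<subseteq> \<tau> G" if "F face_of P" "G face_of P" for F G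
    using tc that by (simp add: comb_auts_def faces_def)
  have cvx: "convex P" using P by (simp add: polytope_imp_convex)
  have "P \<noteq> {}" using dim by auto
  then obtain x where x: "x \<in> rel_interior P" using rel_interior_eq_empty cvx by blast
  have bl: "bounded_linear (uminus :: real^3 \<Rightarrow> real^3)"
    using bounded_linear_minus[OF bounded_linear_ident] by simp
  have "rel_interior (uminus ` P) = uminus ` rel_interior P"
    using rel_interior_injective_linear_image[OF bl] by (simp add: inj_on_def)
  then have "-x \<in> rel_interior P" using x sym by auto
  then have "(1/2) *\<^sub>R x + (1/2) *\<^sub>R (-x) \<in> rel_interior P"
    using x convex_rel_interior[OF cvx] by (intro convexD) auto
  then have P0: "0 \<in> rel_interior P" by simp
  obtain g where contg: "continuous_on (rel_frontier P) g"
    and gin: "g ` rel_frontier P \<subseteq> rel_frontier P"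
    and nfix: "\<And>x. x \<in> rel_frontier P \<Longrightarrow> g (g x) \<noteq> x"
    using geo[OF P P0 sym bij mono sq] by blast
  have "rel_frontier P homeomorphic rel_frontier (cball (0::real^3) 1)"
    using P by (intro homeomorphic_rel_frontiers_convex_bounded_sets)
      (auto simp: polytope_imp_convex polytope_imp_bounded dim aff_dim_cball)
  then have "rel_frontier P homeomorphic sphere (0::real^3) 1"
    by (simp add: rel_frontier_cball)
  then obtain f2 g2 where hm2: "homeomorphism (rel_frontier P) (sphere (0::real^3) 1) f2 g2"
    by (auto simp: homeomorphic_def)
  obtain f1 :: "(nat \<Rightarrow> real) \<Rightarrow> real^3" and g1
    where hm1: "homeomorphic_maps (nsphere (3 - 1)) (top_of_set (sphere (0::real^3) 1 \<inter> span Basis)) f1 g1"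
    using homeomorphic_maps_nsphere_euclidean_sphere[of "Basis :: (real^3) set" 3]
      independent_Basis orthogonal_Basis by auto
  then have hm1': "homeomorphic_maps (nsphere 2) (top_of_set (sphere (0::real^3) 1)) f1 g1"
    by simp
  have hm2': "homeomorphic_maps (top_of_set (sphere (0::real^3) 1)) (top_of_set (rel_frontier P)) g2 f2"
    using hm2 by (simp add: homeomorphism_symD)
  have hm: "homeomorphic_maps (nsphere 2) (top_of_set (rel_frontier P)) (g2 \<circ> f1) (g1 \<circ> f2)"
    using homeomorphic_maps_compose hm1' hm2' by blast
  define \<phi> where "\<phi> = g2 \<circ> f1"
  define \<psi> where "\<psi> = g1 \<circ> f2"
  have c\<phi>: "continuous_map (nsphere 2) (top_of_set (rel_frontier P)) \<phi>"
    and c\<psi>: "continuous_map (top_of_set (rel_frontier P)) (nsphere 2) \<psi>"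
    and \<phi>\<psi>: "\<And>z. z \<in> rel_frontier P \<Longrightarrow> \<phi> (\<psi> z) = z"
    using hm unfolding homeomorphic_maps_def \<phi>_def \<psi>_def by auto
  have cg: "continuous_map (top_of_set (rel_frontier P)) (top_of_set (rel_frontier P)) g"
    using contg gin by (auto simp: continuous_map_subtopology_eu)
  define G where "G = \<psi> \<circ> g \<circ> \<phi>"
  have cG: "continuous_map (nsphere 2) (nsphere 2) G"
    unfolding G_def by (rule continuous_map_compose[OF c\<phi> continuous_map_compose[OF cg c\<psi>]])
  obtain y where y: "y \<in> topspace (nsphere 2)" and Gy: "G (G y) = y"
    using nsphere2_square_fixpoint[OF cG] by blast
  define z where "z = \<phi> y"
  have z: "z \<in> rel_frontier P" using c\<phi> y unfolding z_def by (auto simp: continuous_map_def)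
  have gz: "g z \<in> rel_frontier P" using gin z by blast
  have ggz: "g (g z) \<in> rel_frontier P" using gin gz by blast
  have "G (G y) = \<psi> (g (g z))"
    unfolding G_def z_def by (simp add: \<phi>\<psi>[OF gz[unfolded z_def]])
  then have "\<psi> (g (g z)) = y" using Gy by simp
  then have "\<phi> (\<psi> (g (g z))) = z" unfolding z_def by simp
  then have "g (g z) = z" using \<phi>\<psi>[OF ggz] by simp
  then show False using nfix[OF z] by simp
qed

end
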